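(* Let $(S,K,I)$ be a split graph. If $A_4(S)$ is connected, then $\Phi(S)$ is connected.
   Context: All graphs are finite and simple. A split graph is a graph $S$ whose vertex set is a disjoint union $V(S)=K\,\dot\cup\,I$ with $K$ a clique and $I$ an independent set; $(K,I)$ is called a bipartition of $S$, and $(S,K,I)$ denotes $S$ together with this fixed bipartition. A 2-switch in a graph $G$ is performed on four distinct vertices $a,b,c,d$ with $ab,cd\in E(G)$ and $ac,bd\notin E(G)$: it deletes $ab,cd$ and adds $ac,bd$; $a,b,c,d$ are said to participate in it. $A_4(G)$ is the graph with vertex set $V(G)$ in which distinct $u,v$ are adjacent iff some 2-switch on $G$ has both $u$ and $v$ among its participating vertices. For a split graph $(S,K,I)$ and distinct $u,v\in I$, $\sigma_{uv}(S)$ is the number of induced subgraphs of $S$ isomorphic to $P_4$ containing both $u$ and $v$. The factor graph $\Phi(S)$ is the loopless multigraph with vertex set $I$ having exactly $\sigma_{uv}(S)$ parallel edges between $u$ and $v$. Graph notions (connected, complete, clique, etc.) applied to $\Phi(S)$ refer to its underlying simple graph, in which $u\sim v$ iff $\sigma_{uv}(S)\ge1$. *)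

theory Defs
  imports Main
begin

definition simple_graph :: "'a set \<Rightarrow> ('a \<Rightarrow> 'a \<Rightarrow> bool) \<Rightarrow> bool" where
  "simple_graph V adj \<longleftrightarrow> finite V \<and>
     (\<forall>x y. adj x y \<longrightarrow> x \<in> V \<and> y \<in> V) \<and>
     (\<forall>x y. adj x y \<longrightarrow> adj y x) \<and> (\<forall>x. \<not> adj x x)"

definition split_graph :: "'a set \<Rightarrow> ('a \<Rightarrow> 'a \<Rightarrow> bool) \<Rightarrow> 'a set \<Rightarrow> 'a set \<Rightarrow> bool" where
  "split_graph V adj K I \<longleftrightarrow> simple_graph V adj \<and> V = K \<union> I \<and> K \<inter> I = {} \<and>
     (\<forall>x\<in>K. \<forall>y\<in>K. x \<noteq> y \<longrightarrow> adj x y) \<and>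
     (\<forall>x\<in>I. \<forall>y\<in>I. \<not> adj x y)"

definition two_switch :: "'a set \<Rightarrow> ('a \<Rightarrow> 'a \<Rightarrow> bool) \<Rightarrow> 'a \<Rightarrow> 'a \<Rightarrow> 'a \<Rightarrow> 'a \<Rightarrow> bool" where
  "two_switch V adj a b c d \<longleftrightarrow> a \<in> V \<and> b \<in> V \<and> c \<in> V \<and> d \<in> V \<and>
     distinct [a, b, c, d] \<and> adj a b \<and> adj c d \<and> \<not> adj a c \<and> \<not> adj b d"

definition A4_adj :: "'a set \<Rightarrow> ('a \<Rightarrow> 'a \<Rightarrow> bool) \<Rightarrow> 'a \<Rightarrow> 'a \<Rightarrow> bool" where
  "A4_adj V adj u v \<longleftrightarrow> u \<noteq> v \<and>
     (\<exists>a b c d. two_switch V adj a b c d \<and> u \<in> {a, b, c, d} \<and> v \<in> {a, b, c, d})"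

definition induced_P4 :: "'a set \<Rightarrow> ('a \<Rightarrow> 'a \<Rightarrow> bool) \<Rightarrow> 'a set \<Rightarrow> bool" where
  "induced_P4 V adj X \<longleftrightarrow> X \<subseteq> V \<and>
     (\<exists>w1 w2 w3 w4. distinct [w1, w2, w3, w4] \<and> X = {w1, w2, w3, w4} \<and>
        adj w1 w2 \<and> adj w2 w3 \<and> adj w3 w4 \<and>
        \<not> adj w1 w3 \<and> \<not> adj w1 w4 \<and> \<not> adj w2 w4)"

definition sigma :: "'a set \<Rightarrow> ('a \<Rightarrow> 'a \<Rightarrow> bool) \<Rightarrow> 'a \<Rightarrow> 'a \<Rightarrow> nat" where
  "sigma V adj u v = card {X. induced_P4 V adj X \<and> u \<in> X \<and> v \<in> X}"

text \<open>Underlying simple graph of the factor graph Phi(S) on vertex set I.\<close>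
definition Phi_adj :: "'a set \<Rightarrow> ('a \<Rightarrow> 'a \<Rightarrow> bool) \<Rightarrow> 'a set \<Rightarrow> 'a \<Rightarrow> 'a \<Rightarrow> bool" where
  "Phi_adj V adj I u v \<longleftrightarrow> u \<in> I \<and> v \<in> I \<and> u \<noteq> v \<and> sigma V adj u v \<ge> 1"

text \<open>Connectedness of the graph with vertex set W and adjacency R
 (every two vertices joined by a walk; the empty graph counts as connected).\<close>
definition connected_graph :: "'a set \<Rightarrow> ('a \<Rightarrow> 'a \<Rightarrow> bool) \<Rightarrow> bool" where
  "connected_graph W R \<longleftrightarrow>
     (\<forall>u\<in>W. \<forall>v\<in>W. (u, v) \<in> {(x, y). x \<in> W \<and> y \<in> W \<and> R x y}\<^sup>*)"

end

theory Submission
  imports Defs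
begin

definition inc :: "('a \<Rightarrow> 'a \<Rightarrow> bool) \<Rightarrow> 'a set \<Rightarrow> 'a \<Rightarrow> 'a \<Rightarrow> bool" where
  "inc adj I a b \<longleftrightarrow> a \<in> I \<and> b \<in> I \<and> (\<exists>k. adj a k \<and> \<not> adj b k) \<and> (\<exists>k. adj b k \<and> \<not> adj a k)"

definition memb :: "('a \<Rightarrow> 'a \<Rightarrow> bool) \<Rightarrow> 'a set \<Rightarrow> 'a \<Rightarrow> 'a \<Rightarrow> 'a \<Rightarrow> bool" where
  "memb adj K x a b \<longleftrightarrow> x = a \<or> x = b \<or> (x \<in> K \<and> adj a x \<noteq> adj b x)"

definition PhiR where
  "PhiR V adj I = {(x, y). x \<in> I \<and> y \<in> I \<and> Phi_adj V adj I x y}"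

lemma inc_sym: "inc adj I a b \<Longrightarrow> inc adj I b a"
  unfolding inc_def by blast

lemma inc_Phi:
  assumes S: "split_graph V adj K I" and i: "inc adj I a b"
  shows "(a, b) \<in> PhiR V adj I"
proof -
  from i obtain k k' where a: "a \<in> I" and b: "b \<in> I" and k: "adj a k" "\<not> adj b k"
    and k': "adj b k'" "\<not> adj a k'" unfolding inc_def by blast
  have sg: "finite V" "\<forall>x y. adj x y \<longrightarrow> x \<in> V \<and> y \<in> V" "\<forall>x y. adj x y \<longrightarrow> adj y x"
    "\<forall>x. \<not> adj x x" "V = K \<union> I" "K \<inter> I = {}" "\<forall>x\<in>K. \<forall>y\<in>K. x \<noteq> y \<longrightarrow> adj x y"
    "\<forall>x\<in>I. \<forall>y\<in>I. \<not> adj x y"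
    using S unfolding split_graph_def simple_graph_def by auto
  have kK: "k \<in> K" using sg k a by blast
  have k'K: "k' \<in> K" using sg k' b by blast
  have kk: "k \<noteq> k'" using k k' by blast
  have ab: "a \<noteq> b" using k by blast
  have P: "induced_P4 V adj {a, k, k', b}"
    unfolding induced_P4_def
  proof (intro conjI exI)
    show "{a, k, k', b} \<subseteq> V" using sg a b kK k'K by blast
    show "distinct [a, k, k', b]" using kK k'K a b sg kk ab by auto
  qed (use k k' sg kK k'K kk a b in auto)
  let ?S = "{X. induced_P4 V adj X \<and> a \<in> X \<and> b \<in> X}"
  have "?S \<subseteq> Pow V" unfolding induced_P4_def by blast
  hence fin: "finite ?S" using sg(1) by (meson finite_Pow_iff finite_subset)
  have "{a, k, k', b} \<in> ?S" using P by blast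
  hence "card ?S \<ge> 1" using fin by (metis One_nat_def Suc_leI card_gt_0_iff empty_iff)
  thus ?thesis unfolding PhiR_def Phi_adj_def sigma_def using a b ab by auto
qed

lemma PhiR_sym: "(a, b) \<in> PhiR V adj I \<Longrightarrow> (b, a) \<in> PhiR V adj I"
proof -
  assume h: "(a, b) \<in> PhiR V adj I"
  have "{X. induced_P4 V adj X \<and> a \<in> X \<and> b \<in> X} = {X. induced_P4 V adj X \<and> b \<in> X \<and> a \<in> X}"
    by blast
  thus ?thesis using h unfolding PhiR_def Phi_adj_def sigma_def by auto
qed

lemma PhiR_rtr_sym: "(a, b) \<in> (PhiR V adj I)\<^sup>* \<Longrightarrow> (b, a) \<in> (PhiR V adj I)\<^sup>*"
  by (induction rule: rtrancl_induct)
     (auto intro: converse_rtrancl_into_rtrancl PhiR_sym)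

lemma core:
  assumes S: "split_graph V adj K I" and i1: "inc adj I a b" and i2: "inc adj I c d"
    and x: "adj a x" "\<not> adj b x" "adj c x" "\<not> adj d x"
  shows "(a, c) \<in> (PhiR V adj I)\<^sup>*"
proof (cases "inc adj I a d")
  case True
  have "(a, d) \<in> PhiR V adj I" using inc_Phi[OF S True] .
  moreover have "(d, c) \<in> PhiR V adj I" using inc_Phi[OF S inc_sym[OF i2]] .
  ultimately show ?thesis by auto
next
  case F1: False
  show ?thesis
  proof (cases "inc adj I c b")
    case True
    have "(a, b) \<in> PhiR V adj I" using inc_Phi[OF S i1] .
    moreover have "(b, c) \<in> PhiR V adj I" using inc_Phi[OF S inc_sym[OF True]] .
    ultimately show ?thesis by auto
  next
    case F2: False
    have s1: "\<forall>k. adj d k \<longrightarrow> adj a k" using F1 i1 i2 x unfolding inc_def by blast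
    have s2: "\<forall>k. adj b k \<longrightarrow> adj c k" using F2 i1 i2 x unfolding inc_def by blast
    have "inc adj I a c" using s1 s2 i1 i2 unfolding inc_def by blast
    thus ?thesis using inc_Phi[OF S] by blast
  qed
qed

lemma share:
  assumes S: "split_graph V adj K I" and i1: "inc adj I a b" and i2: "inc adj I c d"
    and m1: "memb adj K x a b" and m2: "memb adj K x c d"
  shows "(a, c) \<in> (PhiR V adj I)\<^sup>*"
proof -
  have KI: "K \<inter> I = {}" using S unfolding split_graph_def by blast
  have ab: "(a, b) \<in> PhiR V adj I" "(b, a) \<in> PhiR V adj I"
    using inc_Phi[OF S i1] inc_Phi[OF S inc_sym[OF i1]] by auto
  have cd: "(c, d) \<in> PhiR V adj I" "(d, c) \<in> PhiR V adj I"
    using inc_Phi[OF S i2] inc_Phi[OF S inc_sym[OF i2]] by auto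
  have I4: "a \<in> I" "b \<in> I" "c \<in> I" "d \<in> I" using i1 i2 unfolding inc_def by auto
  have c1: "(a, c) \<in> (PhiR V adj I)\<^sup>*" if "adj a x" "\<not> adj b x" "adj c x" "\<not> adj d x"
    using core[OF S i1 i2] that by blast
  have c2: "(b, c) \<in> (PhiR V adj I)\<^sup>*" if "adj b x" "\<not> adj a x" "adj c x" "\<not> adj d x"
    using core[OF S inc_sym[OF i1] i2] that by blast
  have c3: "(a, d) \<in> (PhiR V adj I)\<^sup>*" if "adj a x" "\<not> adj b x" "adj d x" "\<not> adj c x"
    using core[OF S i1 inc_sym[OF i2]] that by blast
  have c4: "(b, d) \<in> (PhiR V adj I)\<^sup>*" if "adj b x" "\<not> adj a x" "adj d x" "\<not> adj c x"
    using core[OF S inc_sym[OF i1] inc_sym[OF i2]] that by blast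
  show ?thesis
  proof (cases "x \<in> K")
    case True
    hence "x \<noteq> a" "x \<noteq> b" "x \<noteq> c" "x \<noteq> d" using KI I4 by auto
    hence xa: "adj a x \<noteq> adj b x" "adj c x \<noteq> adj d x" using m1 m2 unfolding memb_def by auto
    show ?thesis
    proof (cases "adj a x")
      case True
      show ?thesis
      proof (cases "adj c x")
        case True
        then show ?thesis using c1 xa \<open>adj a x\<close> by auto
      next
        case False
        then show ?thesis using c3 xa \<open>adj a x\<close> cd by (auto intro: rtrancl_into_rtrancl)
      qed
    next
      case False
      show ?thesis
      proof (cases "adj c x")
        case True
        then show ?thesis using c2 xa \<open>\<not> adj a x\<close> ab by (auto intro: converse_rtrancl_into_rtrancl)
      next
        case False
        then show ?thesis using c4 xa \<open>\<not> adj a x\<close> ab cd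
          by (meson converse_rtrancl_into_rtrancl rtrancl_into_rtrancl)
      qed
    qed
  next
    case False
    hence "x = a \<or> x = b" "x = c \<or> x = d" using m1 m2 unfolding memb_def by auto
    then show ?thesis using ab cd
      by (metis converse_rtrancl_into_rtrancl r_into_rtrancl rtrancl.rtrancl_refl)
  qed
qed

lemma switch:
  assumes S: "split_graph V adj K I" and t: "two_switch V adj a b c d"
  shows "\<exists>e1 e2. inc adj I e1 e2 \<and> memb adj K a e1 e2 \<and> memb adj K b e1 e2
     \<and> memb adj K c e1 e2 \<and> memb adj K d e1 e2"
proof -
  have sg: "\<forall>x y. adj x y \<longrightarrow> x \<in> V \<and> y \<in> V" "\<forall>x y. adj x y \<longrightarrow> adj y x"
    "V = K \<union> I" "K \<inter> I = {}" "\<forall>x\<in>K. \<forall>y\<in>K. x \<noteq> y \<longrightarrow> adj x y"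
    "\<forall>x\<in>I. \<forall>y\<in>I. \<not> adj x y"
    using S unfolding split_graph_def simple_graph_def by auto
  from t have tt: "a \<in> V" "b \<in> V" "c \<in> V" "d \<in> V" "distinct [a, b, c, d]" "adj a b" "adj c d"
    "\<not> adj a c" "\<not> adj b d" unfolding two_switch_def by auto
  show ?thesis
  proof (cases "a \<in> K")
    case True
    have "c \<notin> K" using True tt(5,8) sg(5) by auto
    hence "c \<in> I" using tt(3) sg(3) by blast
    have "d \<notin> I" using \<open>c \<in> I\<close> tt(7) sg(6) by blast
    hence "d \<in> K" using tt(4) sg(3) by blast
    have "b \<notin> K" using \<open>d \<in> K\<close> tt(5,9) sg(5) by auto
    hence "b \<in> I" using tt(2) sg(3) by blast
    have "inc adj I b c" unfolding inc_def using tt sg \<open>b \<in> I\<close> \<open>c \<in> I\<close> by blast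
    moreover have "memb adj K a b c" "memb adj K d b c" "memb adj K b b c" "memb adj K c b c"
      unfolding memb_def using tt sg True \<open>d \<in> K\<close> by auto
    ultimately show ?thesis by blast
  next
    case False
    have "a \<in> I" using False tt(1) sg(3) by blast
    have "b \<notin> I" using \<open>a \<in> I\<close> tt(6) sg(6) by blast
    hence "b \<in> K" using tt(2) sg(3) by blast
    have "d \<notin> K" using \<open>b \<in> K\<close> tt(5,9) sg(5) by auto
    hence "d \<in> I" using tt(4) sg(3) by blast
    have "c \<notin> I" using \<open>d \<in> I\<close> tt(7) sg(6) by blast
    hence "c \<in> K" using tt(3) sg(3) by blast
    have "inc adj I a d" unfolding inc_def using tt sg \<open>a \<in> I\<close> \<open>d \<in> I\<close> by blast
    moreover have "memb adj K b a d" "memb adj K c a d" "memb adj K a a d" "memb adj K d a d"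
      unfolding memb_def using tt sg \<open>b \<in> K\<close> \<open>c \<in> K\<close> by auto
    ultimately show ?thesis by blast
  qed
qed

lemma A4_pair:
  assumes S: "split_graph V adj K I" and A: "A4_adj V adj x y"
  shows "\<exists>e1 e2. inc adj I e1 e2 \<and> memb adj K x e1 e2 \<and> memb adj K y e1 e2"
proof -
  from A obtain a b c d where t: "two_switch V adj a b c d" and "x \<in> {a, b, c, d}" "y \<in> {a, b, c, d}"
    unfolding A4_adj_def by blast
  with switch[OF S t] show ?thesis by blast
qed

lemma reach:
  assumes S: "split_graph V adj K I" and u: "u \<in> I"
    and r: "(u, y) \<in> {(x, y). x \<in> V \<and> y \<in> V \<and> A4_adj V adj x y}\<^sup>*"
  shows "\<forall>a b. inc adj I a b \<and> memb adj K y a b \<longrightarrow> (u, a) \<in> (PhiR V adj I)\<^sup>*"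
  using r
proof (induction rule: rtrancl_induct)
  case base
  have KI: "K \<inter> I = {}" using S unfolding split_graph_def by blast
  show ?case
  proof (intro allI impI)
    fix a b assume h: "inc adj I a b \<and> memb adj K u a b"
    hence "u = a \<or> u = b" using u KI unfolding memb_def by auto
    thus "(u, a) \<in> (PhiR V adj I)\<^sup>*" using inc_Phi[OF S inc_sym] h by blast
  qed
next
  case (step x y)
  show ?case
  proof (intro allI impI)
    fix a b assume h: "inc adj I a b \<and> memb adj K y a b"
    from step(2) have "A4_adj V adj x y" by simp
    then obtain e1 e2 where e: "inc adj I e1 e2" "memb adj K x e1 e2" "memb adj K y e1 e2"
      using A4_pair[OF S] by blast
    have "(u, e1) \<in> (PhiR V adj I)\<^sup>*" using step(3) e by blast
    moreover have "(e1, a) \<in> (PhiR V adj I)\<^sup>*" using share[OF S e(1) _ e(3)] h by blast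
    ultimately show "(u, a) \<in> (PhiR V adj I)\<^sup>*" by simp
  qed
qed

theorem theorem2p4:
  fixes V K I :: "'a set" and adj :: "'a \<Rightarrow> 'a \<Rightarrow> bool"
  assumes "split_graph V adj K I"
    and "connected_graph V (A4_adj V adj)"
  shows "connected_graph I (Phi_adj V adj I)"
proof -
  note S = assms(1)
  have VI: "I \<subseteq> V" using S unfolding split_graph_def by blast
  have "(u, v) \<in> (PhiR V adj I)\<^sup>*" if u: "u \<in> I" and v: "v \<in> I" for u v
  proof -
    have r: "(u, v) \<in> {(x, y). x \<in> V \<and> y \<in> V \<and> A4_adj V adj x y}\<^sup>*"
      using assms(2) u v VI unfolding connected_graph_def by blast
    show ?thesis
    proof (cases "u = v")
      case True thus ?thesis by simp
    next
      case False
      then obtain x where "(x, v) \<in> {(x, y). x \<in> V \<and> y \<in> V \<and> A4_adj V adj x y}"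
        using r by (metis rtranclE)
      hence "A4_adj V adj x v" by simp
      then obtain e1 e2 where e: "inc adj I e1 e2" "memb adj K v e1 e2"
        using A4_pair[OF S] by blast
      have KI: "K \<inter> I = {}" using S unfolding split_graph_def by blast
      have "v = e1 \<or> v = e2" using e(2) v KI unfolding memb_def by auto
      hence "\<exists>w. inc adj I v w" using e(1) inc_sym[OF e(1)] by (cases "v = e1") auto
      then obtain w where "inc adj I v w" by blast
      moreover have "memb adj K v v w" unfolding memb_def by simp
      ultimately show ?thesis using reach[OF S u r] by blast
    qed
  qed
  thus ?thesis unfolding connected_graph_def PhiR_def by simp
qed

end
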